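(* Let $\Gamma$ be an alphabet and let $P_0,P_1,\dots,P_d$ be nonempty strings over $\Gamma$ such that $P_{j-1}$ is a prefix of $P_j$ for every $j\in\{1,\dots,d\}$. For a finite multiset $\mathcal{D}$ of strings over $\Gamma$ define \[ \Delta_{\mathcal{D}}=\big(\mathrm{freq}_{\mathcal{D}}(P_0),\ \mathrm{freq}_{\mathcal{D}}(P_1)-\mathrm{freq}_{\mathcal{D}}(P_0),\ \dots,\ \mathrm{freq}_{\mathcal{D}}(P_d)-\mathrm{freq}_{\mathcal{D}}(P_{d-1})\big)\in\mathbb{Z}^{d+1}. \] Let $S\in\mathcal{D}$, let $S'$ be any string over $\Gamma$, and let $\mathcal{D}'=(\mathcal{D}\setminus\{S\})\cup\{S'\}$ (one copy of $S$ replaced by $S'$). Then \[ \|\Delta_{\mathcal{D}}-\Delta_{\mathcal{D}'}\|_1\le 2\max\{\mathrm{freq}_S(P_0),\ \mathrm{freq}_{S'}(P_0)\}. \]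
   Context: For strings $P,S$, $\mathrm{freq}_S(P)$ is the number of positions $i$ with $S[i\ldots i+|P|-1]=P$, and for a multiset $\mathcal{D}$, $\mathrm{freq}_{\mathcal{D}}(P)=\sum_{S\in\mathcal{D}}\mathrm{freq}_S(P)$ (with multiplicity). In the paper, $P_0,\dots,P_d$ are the path labels of the nodes along a heavy path (from its head downward) in a trie-like candidate tree, so consecutive labels are prefixes of one another. *)

theory Defs
  imports Main "HOL-Library.Multiset" "HOL-Library.Sublist"
begin

definition freq :: "'a list \<Rightarrow> 'a list \<Rightarrow> nat" where
  "freq S P = card {i. i + length P \<le> length S \<and> take (length P) (drop i S) = P}"

definition freqD :: "'a list multiset \<Rightarrow> 'a list \<Rightarrow> nat" where
  "freqD D P = (\<Sum>S\<in>#D. freq S P)"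

definition delta :: "'a list multiset \<Rightarrow> (nat \<Rightarrow> 'a list) \<Rightarrow> nat \<Rightarrow> int" where
  "delta D P j = (if j = 0 then int (freqD D (P 0))
                  else int (freqD D (P j)) - int (freqD D (P (j - 1))))"

end

theory Submission
  imports Defs
begin

lemma freq_prefix_mono:
  assumes "prefix p q"
  shows "freq S q \<le> freq S p"
  unfolding freq_def
proof (rule card_mono)
  show "finite {i. i + length p \<le> length S \<and> take (length p) (drop i S) = p}"
    by (rule finite_subset[of _ "{..length S}"]) auto
  show "{i. i + length q \<le> length S \<and> take (length q) (drop i S) = q}
        \<subseteq> {i. i + length p \<le> length S \<and> take (length p) (drop i S) = p}"
  proof
    fix i assume "i \<in> {i. i + length q \<le> length S \<and> take (length q) (drop i S) = q}"
    then have h: "i + length q \<le> length S" "take (length q) (drop i S) = q" by auto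
    obtain r where q: "q = p @ r" using assms prefix_def by blast
    have "take (length p) (drop i S) = take (length p) (take (length q) (drop i S))"
      using q by (simp add: min_def)
    also have "\<dots> = p" using h(2) q by simp
    finally show "i \<in> {i. i + length p \<le> length S \<and> take (length p) (drop i S) = p}"
      using h(1) q by simp
  qed
qed

lemma freqD_repl:
  assumes "S \<in># D"
  shows "int (freqD (add_mset S' (D - {#S#})) p) = int (freqD D p) - int (freq S p) + int (freq S' p)"
proof -
  have D: "D = add_mset S (D - {#S#})" using assms by simp
  have "freqD D p = freq S p + freqD (D - {#S#}) p"
    by (subst D) (simp add: freqD_def)
  then show ?thesis by (simp add: freqD_def)
qed

lemma gen_bound:
  fixes a b :: "nat \<Rightarrow> int"
  assumes "\<And>j. j \<in> {1..d} \<Longrightarrow> a j \<le> a (j - 1)"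
    and "\<And>j. j \<in> {1..d} \<Longrightarrow> b j \<le> b (j - 1)"
  shows "(\<Sum>j\<le>d. \<bar>(if j = 0 then a 0 - b 0 else (a j - a (j - 1)) - (b j - b (j - 1)))\<bar>)
          \<le> \<bar>a 0 - b 0\<bar> + (a 0 - a d) + (b 0 - b d)"
  using assms
proof (induction d)
  case 0
  then show ?case by simp
next
  case (Suc d)
  have IH: "(\<Sum>j\<le>d. \<bar>(if j = 0 then a 0 - b 0 else (a j - a (j - 1)) - (b j - b (j - 1)))\<bar>)
          \<le> \<bar>a 0 - b 0\<bar> + (a 0 - a d) + (b 0 - b d)"
    using Suc.prems by (intro Suc.IH) auto
  have "a (Suc d) \<le> a d" "b (Suc d) \<le> b d" using Suc.prems[of "Suc d"] by auto
  then show ?case using IH by simp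
qed

theorem mainTheorem3:
  fixes P :: "nat \<Rightarrow> 'a list" and d :: nat
    and D :: "'a list multiset" and S S' :: "'a list"
  assumes nonempty: "\<And>j. j \<le> d \<Longrightarrow> P j \<noteq> []"
    and chain: "\<And>j. j \<in> {1..d} \<Longrightarrow> prefix (P (j - 1)) (P j)"
    and inD: "S \<in># D"
  shows "(\<Sum>j\<le>d. \<bar>delta D P j - delta (add_mset S' (D - {#S#})) P j\<bar>)
           \<le> 2 * int (max (freq S (P 0)) (freq S' (P 0)))"
proof -
  define a where "a j = int (freq S (P j))" for j
  define b where "b j = int (freq S' (P j))" for j
  have eq: "delta D P j - delta (add_mset S' (D - {#S#})) P j
        = (if j = 0 then a 0 - b 0 else (a j - a (j - 1)) - (b j - b (j - 1)))" for j
    unfolding delta_def a_def b_def using freqD_repl[OF inD] by simp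
  have "(\<Sum>j\<le>d. \<bar>delta D P j - delta (add_mset S' (D - {#S#})) P j\<bar>)
        \<le> \<bar>a 0 - b 0\<bar> + (a 0 - a d) + (b 0 - b d)"
    unfolding eq
  proof (rule gen_bound)
    fix j assume j: "j \<in> {1..d}"
    show "a j \<le> a (j - 1)" unfolding a_def using freq_prefix_mono[OF chain[OF j]] by simp
    show "b j \<le> b (j - 1)" unfolding b_def using freq_prefix_mono[OF chain[OF j]] by simp
  qed
  also have "\<dots> \<le> 2 * int (max (freq S (P 0)) (freq S' (P 0)))"
    unfolding a_def b_def by (simp add: max_def)
  finally show ?thesis .
qed

end
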